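(* For real $z<1$, $z\ne0$, \[ -\log(1-z)=\cfrac{2z}{(2-z)-\cfrac{z^2}{3(2-z)-\cfrac{4z^2}{5(2-z)-\cfrac{9z^2}{7(2-z)-\cdots}}}}, \] i.e. the continued fraction with $a(0)=0$, $a(n)=(2n-1)(2-z)$ for $n\ge1$, $b(0)=2z$, $b(n)=-n^2z^2$ for $n\ge1$. Moreover, with $p(n)/q(n)$ its $n$-th convergent, as $n\to\infty$ \[ -\log(1-z)-\frac{p(n)}{q(n)}\sim\frac{2\pi}{\big((1+\sqrt{1-z})^2/z\big)^{2n+1}}. \]
   Context: For sequences $a(n),b(n)$, the continued fraction is $a(0)+\cfrac{b(0)}{a(1)+\cfrac{b(1)}{a(2)+\cdots}}$ and its $n$-th convergent $p(n)/q(n)$ is the truncation ending with $b(n-1)/a(n)$. *)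

theory Defs
  imports Complex_Main "HOL-Library.Landau_Symbols"
begin

text \<open>Numerators and denominators of the convergents of the continued fraction
  a(0) + b(0)/(a(1) + b(1)/(a(2) + ...)), via the standard three-term recurrences,
  so that cf_p a b n / cf_q a b n is the truncation ending with b(n-1)/a(n).\<close>

fun cf_p :: "(nat \<Rightarrow> real) \<Rightarrow> (nat \<Rightarrow> real) \<Rightarrow> nat \<Rightarrow> real" where
  "cf_p a b 0 = a 0"
| "cf_p a b (Suc 0) = a 1 * a 0 + b 0"
| "cf_p a b (Suc (Suc n)) = a (n + 2) * cf_p a b (Suc n) + b (n + 1) * cf_p a b n"

fun cf_q :: "(nat \<Rightarrow> real) \<Rightarrow> (nat \<Rightarrow> real) \<Rightarrow> nat \<Rightarrow> real" where
  "cf_q a b 0 = 1"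
| "cf_q a b (Suc 0) = a 1"
| "cf_q a b (Suc (Suc n)) = a (n + 2) * cf_q a b (Suc n) + b (n + 1) * cf_q a b n"

definition log_cf_a :: "real \<Rightarrow> nat \<Rightarrow> real" where
  "log_cf_a z n = (if n = 0 then 0 else (2 * real n - 1) * (2 - z))"

definition log_cf_b :: "real \<Rightarrow> nat \<Rightarrow> real" where
  "log_cf_b z n = (if n = 0 then 2 * z else - ((real n)^2 * z^2))"

end

theory Submission
  imports Defs "HOL-Analysis.Analysis" "HOL-Computational_Algebra.Formal_Power_Series" "HOL-Real_Asymp.Real_Asymp"
begin


fun cc :: "nat \<Rightarrow> real" where
  "cc 0 = 1"
| "cc (Suc n) = cc n * (2 * real n + 1) / (2 * real n + 2)"

lemma cc_pos: "cc n > 0"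
  by (induction n) auto

lemma cc_upper: "cc n ^ 2 * (real n + 1) \<le> 1"
proof (induction n)
  case 0 then show ?case by simp
next
  case (Suc n)
  have "cc (Suc n) ^ 2 * (real (Suc n) + 1) = cc n ^ 2 * ((2 * real n + 1)^2 * (real n + 2) / (2 * real n + 2)^2)"
    by (simp add: power_divide power_mult_distrib field_simps) (simp add: power2_eq_square algebra_simps)
  also have "\<dots> \<le> cc n ^ 2 * (real n + 1)"
  proof (rule mult_left_mono)
    have "(2 * real n + 1)^2 * (real n + 2) \<le> (real n + 1) * (2 * real n + 2)^2"
      by (simp add: power2_eq_square algebra_simps)
    then show "(2 * real n + 1)^2 * (real n + 2) / (2 * real n + 2)^2 \<le> real n + 1"
      by (simp add: divide_le_eq)
  qed simp
  finally show ?case using Suc by linarith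
qed

lemma cc_le1: "cc n \<le> 1"
proof -
  have "cc n ^ 2 * 1 \<le> cc n ^ 2 * (real n + 1)" by (rule mult_left_mono) auto
  then have "cc n ^ 2 \<le> 1" using cc_upper[of n] by linarith
  then show ?thesis using cc_pos[of n] by (simp add: power_le_one_iff abs_le_square_iff)
qed

lemma cc_lower: "cc n * (real n + 1) \<ge> 1"
proof (induction n)
  case 0 then show ?case by simp
next
  case (Suc n)
  have "cc (Suc n) * (real (Suc n) + 1) = cc n * ((2 * real n + 1) * (real n + 2) / (2 * real n + 2))"
    by (simp add: field_simps)
  also have "\<dots> \<ge> cc n * (real n + 1)"
  proof (rule mult_left_mono)
    show "real n + 1 \<le> (2 * real n + 1) * (real n + 2) / (2 * real n + 2)"
      by (simp add: le_divide_eq algebra_simps)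
  qed (use cc_pos[of n] in simp)
  finally show ?case using Suc by linarith
qed

lemma cc_wallis: "cc n ^ 2 * (2 * real n + 1) * (\<Prod>k=1..n. (4*real k^2) / (4*real k^2 - 1)) = 1"
proof (induction n)
  case 0 then show ?case by simp
next
  case (Suc n)
  have e: "(\<Prod>k=1..Suc n. (4*real k^2) / (4*real k^2 - 1)) = (\<Prod>k=1..n. (4*real k^2) / (4*real k^2 - 1)) * ((4*(real n + 1)^2) / (4*(real n+1)^2 - 1))"
    by (simp add: prod.nat_ivl_Suc' add.commute)
  have ne: "4*(real n + 1)^2 - 1 \<noteq> 0" "2 * real n + 2 \<noteq> 0"
  proof -
    have "(real n + 1)^2 \<ge> 1" by (simp add: one_le_power)
    then show "4*(real n + 1)^2 - 1 \<noteq> 0" by linarith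
    have "real n \<ge> 0" by simp
    then show "2 * real n + 2 \<noteq> 0" by linarith
  qed
  have "cc (Suc n) ^ 2 * (2 * real (Suc n) + 1) * (\<Prod>k=1..Suc n. (4*real k^2) / (4*real k^2 - 1))
     = (cc n ^ 2 * (2 * real n + 1) * (\<Prod>k=1..n. (4*real k^2) / (4*real k^2 - 1))) *
       ((2 * real n + 1) * (2 * real n + 3) * (4*(real n + 1)^2) / ((2 * real n + 2)^2 * (4*(real n+1)^2 - 1)))"
    unfolding e using ne by (simp add: power_divide power_mult_distrib field_simps) (simp add: power2_eq_square algebra_simps)
  also have "(2 * real n + 1) * (2 * real n + 3) * (4*(real n + 1)^2) / ((2 * real n + 2)^2 * (4*(real n+1)^2 - 1)) = 1"
  proof -
    have num: "(2 * real n + 1) * (2 * real n + 3) * (4*(real n + 1)^2) = (2 * real n + 2)^2 * (4*(real n+1)^2 - 1)"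
      by (simp add: power2_eq_square algebra_simps)
    have "(2 * real n + 2)^2 * (4*(real n+1)^2 - 1) \<noteq> 0" using ne by simp
    then show ?thesis unfolding num by simp
  qed
  finally show ?case using Suc.IH by (metis mult_1_right)
qed

lemma cc_lim: "(\<lambda>n. sqrt (real n + 1) * cc n) \<longlonglongrightarrow> 1 / sqrt pi"
proof -
  let ?W = "\<lambda>n. \<Prod>k=1..n. (4*real k^2) / (4*real k^2 - 1)"
  have W: "?W \<longlonglongrightarrow> pi / 2" by (rule wallis)
  have eq: "cc n ^ 2 * (real n + 1) = inverse (?W n) * ((real n + 1) / (2 * real n + 1))" for n
  proof -
    have "inverse (?W n) = cc n ^ 2 * (2 * real n + 1)"
      by (rule inverse_unique) (use cc_wallis[of n] in \<open>simp add: mult_ac\<close>)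
    then show ?thesis by (simp add: field_simps)
  qed
  have lim2: "(\<lambda>n. (real n + 1) / (2 * real n + 1)) \<longlonglongrightarrow> 1/2" by real_asymp
  have "(\<lambda>n. inverse (?W n) * ((real n + 1) / (2 * real n + 1))) \<longlonglongrightarrow> inverse (pi/2) * (1/2)"
    by (intro tendsto_intros W lim2) simp
  then have "(\<lambda>n. cc n ^ 2 * (real n + 1)) \<longlonglongrightarrow> 1 / pi"
    unfolding eq by simp
  then have "(\<lambda>n. sqrt (cc n ^ 2 * (real n + 1))) \<longlonglongrightarrow> sqrt (1 / pi)"
    by (rule tendsto_real_sqrt)
  moreover have "sqrt (cc n ^ 2 * (real n + 1)) = sqrt (real n + 1) * cc n" for n
    using cc_pos[of n] by (simp add: real_sqrt_mult)
  ultimately show ?thesis by (simp add: real_sqrt_divide)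
qed



definition Fa :: "real \<Rightarrow> real fps" where "Fa u = Abs_fps (\<lambda>j. cc j * u ^ j)"

definition conv :: "real \<Rightarrow> real \<Rightarrow> nat \<Rightarrow> real" where
  "conv u v n = (\<Sum>k=0..n. cc k * v ^ k * (cc (n - k) * u ^ (n - k)))"

lemma conv_fps: "conv u v n = fps_nth (Fa v * Fa u) n"
  by (simp add: conv_def fps_mult_nth Fa_def)

lemma Fa_deriv: "fps_const 2 * fps_deriv (Fa u) = fps_const 2 * (fps_const u * (fps_X * fps_deriv (Fa u))) + fps_const u * Fa u"
proof (rule fps_ext)
  fix n
  have c: "2 * (real n + 1) * cc (Suc n) = cc n * (2 * real n + 1)"
    by (simp add: field_simps)
  show "fps_nth (fps_const 2 * fps_deriv (Fa u)) n = fps_nth (fps_const 2 * (fps_const u * (fps_X * fps_deriv (Fa u))) + fps_const u * Fa u) n"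
  proof (cases n)
    case 0 then show ?thesis by (simp add: Fa_def)
  next
    case (Suc m)
    have "fps_nth (fps_const 2 * fps_deriv (Fa u)) n = 2 * (real n + 1) * cc (Suc n) * u ^ Suc n"
      by (simp add: Fa_def del: cc.simps)
    also have "\<dots> = cc n * (2 * real n + 1) * u ^ Suc n"
      using c by metis
    also have "\<dots> = u ^ Suc n * cc n * (2 * real n + 1)" by simp
    also have "\<dots> = fps_nth (fps_const 2 * (fps_const u * (fps_X * fps_deriv (Fa u))) + fps_const u * Fa u) n"
      using Suc by (simp add: Fa_def algebra_simps del: cc.simps)
    finally show ?thesis .
  qed
qed

lemma conv_fps_rec:
  fixes u v :: real
  defines "C \<equiv> Fa v * Fa u"
  shows "fps_const 2 * fps_deriv C - fps_const (2 * (u + v)) * (fps_X * fps_deriv C)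
     + fps_const (2 * u * v) * (fps_X * (fps_X * fps_deriv C))
     = fps_const (u + v) * C - fps_const (2 * u * v) * (fps_X * C)"
proof -
  have hu: "fps_const 2 * fps_deriv (Fa u) = fps_const 2 * (fps_const u * (fps_X * fps_deriv (Fa u))) + fps_const u * Fa u"
    by (rule Fa_deriv)
  have hv: "fps_const 2 * fps_deriv (Fa v) = fps_const 2 * (fps_const v * (fps_X * fps_deriv (Fa v))) + fps_const v * Fa v"
    by (rule Fa_deriv)
  have d: "fps_deriv C = fps_deriv (Fa v) * Fa u + Fa v * fps_deriv (Fa u)"
    unfolding C_def by (simp add: fps_deriv_mult)
  have e1: "fps_const (2 * (u + v)) = fps_const 2 * (fps_const u + fps_const v)" by simp
  have e2: "fps_const (2 * u * v) = fps_const 2 * fps_const u * fps_const v" by simp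
  have e3: "fps_const (u + v) = fps_const u + fps_const v" by simp
  have two: "fps_const (2::real) = 2" by (simp add: numeral_fps_const)
  show ?thesis using hu hv unfolding d e1 e2 e3 two unfolding C_def by algebra
qed

lemma coeff_rec:
  fixes C :: "real fps"
  assumes "fps_const 2 * fps_deriv C - fps_const (2 * (u + v)) * (fps_X * fps_deriv C)
     + fps_const (2 * u * v) * (fps_X * (fps_X * fps_deriv C))
     = fps_const (u + v) * C - fps_const (2 * u * v) * (fps_X * C)"
  shows "fps_nth C (n + 2) * (2 * real n + 4) =
   (2 * real n + 3) * (u + v) * fps_nth C (n + 1) - 2 * (real n + 1) * u * v * fps_nth C n"
proof -
  have "fps_nth (fps_const 2 * fps_deriv C - fps_const (2 * (u + v)) * (fps_X * fps_deriv C)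
     + fps_const (2 * u * v) * (fps_X * (fps_X * fps_deriv C))) (n+1)
     = fps_nth (fps_const (u + v) * C - fps_const (2 * u * v) * (fps_X * C)) (n+1)"
    using assms by (simp only:)
  note H = this[unfolded fps_add_nth fps_sub_nth fps_mult_left_const_nth fps_X_mult_nth fps_deriv_nth]
  show ?thesis
  proof (cases n)
    case 0
    then show ?thesis using H by (simp add: algebra_simps; (linarith)?)
  next
    case (Suc m)
    then show ?thesis using H by (simp add: algebra_simps; (linarith)?)
  qed
qed

lemma conv_rec: "conv u v (n + 2) * (2 * real n + 4) =
   (2 * real n + 3) * (u + v) * conv u v (n + 1) - 2 * (real n + 1) * u * v * conv u v n"
  unfolding conv_fps by (rule coeff_rec[OF conv_fps_rec])

lemma conv_0: "conv u v 0 = 1" by (simp add: conv_def)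
lemma conv_1: "conv u v 1 = (u + v) / 2" by (simp add: conv_def)

lemma conv_11: "conv 1 1 n = 1"
proof -
  have "conv 1 1 n = 1 \<and> conv 1 1 (Suc n) = 1"
  proof (induction n)
    case 0 then show ?case by (simp add: conv_def)
  next
    case (Suc n)
    have "conv 1 1 (n + 2) * (2 * real n + 4) = 2 * real n + 4"
      using conv_rec[of 1 1 n] Suc by simp
    then show ?case using Suc by simp
  qed
  then show ?thesis by simp
qed



abbreviation qq :: "real \<Rightarrow> nat \<Rightarrow> real" where "qq z \<equiv> cf_q (log_cf_a z) (log_cf_b z)"
abbreviation pp :: "real \<Rightarrow> nat \<Rightarrow> real" where "pp z \<equiv> cf_p (log_cf_a z) (log_cf_b z)"

lemma qq_rec: "qq z (Suc (Suc n)) = (2 * real n + 3) * (2 - z) * qq z (Suc n) - (real n + 1)^2 * z^2 * qq z n"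
  by (simp add: log_cf_a_def log_cf_b_def algebra_simps)
lemma pp_rec: "pp z (Suc (Suc n)) = (2 * real n + 3) * (2 - z) * pp z (Suc n) - (real n + 1)^2 * z^2 * pp z n"
  by (simp add: log_cf_a_def log_cf_b_def algebra_simps)
lemma qq_0: "qq z 0 = 1" by simp
lemma qq_1: "qq z (Suc 0) = 2 - z" by (simp add: log_cf_a_def)
lemma pp_0: "pp z 0 = 0" by (simp add: log_cf_a_def)
lemma pp_1: "pp z (Suc 0) = 2 * z" by (simp add: log_cf_a_def log_cf_b_def)

lemma qq_conv:
  assumes uv1: "u + v = 2 * (2 - z)" and uv2: "u * v = z^2"
  shows "qq z n = fact n * conv u v n"
proof -
  have "qq z n = fact n * conv u v n \<and> qq z (Suc n) = fact (Suc n) * conv u v (Suc n)"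
  proof (induction n)
    case 0 then show ?case using uv1 by (simp add: conv_def log_cf_a_def)
  next
    case (Suc n)
    have r: "conv u v (n + 2) * (2 * real n + 4) =
      (2 * real n + 3) * (u + v) * conv u v (n + 1) - 2 * (real n + 1) * u * v * conv u v n"
      by (rule conv_rec)
    have r2: "conv u v (n + 2) * (real n + 2) =
      (2 * real n + 3) * (2 - z) * conv u v (n + 1) - (real n + 1) * z^2 * conv u v n"
      using r unfolding uv1 mult.assoc[of _ u v] uv2 by (simp add: algebra_simps)
    have "qq z (Suc (Suc n)) = (2 * real n + 3) * (2 - z) * (fact (Suc n) * conv u v (Suc n))
        - (real n + 1)^2 * z^2 * (fact n * conv u v n)"
      unfolding qq_rec using Suc.IH by simp
    also have "\<dots> = fact (Suc n) * ((2 * real n + 3) * (2 - z) * conv u v (n + 1) - (real n + 1) * z^2 * conv u v n)"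
      by (simp add: algebra_simps power2_eq_square)
    also have "\<dots> = fact (Suc n) * (conv u v (n + 2) * (real n + 2))" by (simp only: r2)
    also have "\<dots> = fact (Suc (Suc n)) * conv u v (Suc (Suc n))" by (simp add: algebra_simps)
    finally show ?case using Suc by simp
  qed
  then show ?thesis by simp
qed

lemma pq_det: "pp z (Suc n) * qq z n - pp z n * qq z (Suc n) = 2 * (fact n)^2 * z^(2*n+1)"
proof (induction n)
  case 0 then show ?case by (simp add: log_cf_a_def log_cf_b_def)
next
  case (Suc n)
  have "pp z (Suc (Suc n)) * qq z (Suc n) - pp z (Suc n) * qq z (Suc (Suc n))
      = (real n + 1)^2 * z^2 * (pp z (Suc n) * qq z n - pp z n * qq z (Suc n))"
    unfolding pp_rec qq_rec by (simp add: algebra_simps)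
  also have "\<dots> = 2 * (fact (Suc n))^2 * z^(2*Suc n+1)" unfolding Suc
    by (simp add: algebra_simps power2_eq_square power_add)
  finally show ?case .
qed



definition dd :: "real \<Rightarrow> real \<Rightarrow> real" where "dd z s = 2 - z - z * s"
definition ff :: "real \<Rightarrow> nat \<Rightarrow> real \<Rightarrow> real" where "ff z n s = (1 - s^2)^n / dd z s ^ (n + 1)"
definition FF :: "real \<Rightarrow> nat \<Rightarrow> real" where "FF z n = integral {-1..1} (ff z n)"

lemma dd_lower: assumes "z < 1" "s \<in> {-1..1}" shows "dd z s \<ge> 2 - z - \<bar>z\<bar>"
proof -
  have s1: "\<bar>s\<bar> \<le> 1" using assms(2) by auto
  have "z * s \<le> \<bar>z * s\<bar>" by simp
  also have "\<dots> = \<bar>z\<bar> * \<bar>s\<bar>" by (simp add: abs_mult)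
  also have "\<dots> \<le> \<bar>z\<bar>" using s1 by (simp add: mult_left_le)
  finally have "z * s \<le> \<bar>z\<bar>" .
  then show ?thesis unfolding dd_def by linarith
qed

lemma dd_pos: assumes "z < 1" "s \<in> {-1..1}" shows "dd z s > 0"
  using dd_lower[OF assms] assms(1) by (cases "z \<ge> 0") auto

lemma ff_cont: assumes "z < 1" shows "continuous_on {-1..1} (ff z n)"
proof -
  have h: "\<forall>s\<in>{-1..1}. (2 - z - z * s) ^ (n + 1) \<noteq> 0"
  proof
    fix s :: real assume "s \<in> {-1..1}"
    then have "dd z s > 0" by (rule dd_pos[OF assms])
    then show "(2 - z - z * s) ^ (n + 1) \<noteq> 0" unfolding dd_def by simp
  qed
  show ?thesis unfolding ff_def dd_def
    by (intro continuous_intros) (use h in auto)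
qed

lemma ff_int: assumes "z < 1" shows "(ff z n has_integral FF z n) {-1..1}"
  unfolding FF_def by (rule integrable_integral, rule integrable_continuous_interval, rule ff_cont[OF assms])

lemma ftc_real:
  fixes f f' :: "real \<Rightarrow> real"
  assumes "a \<le> b" "\<And>x. x \<in> {a..b} \<Longrightarrow> (f has_real_derivative f' x) (at x)"
  shows "(f' has_integral (f b - f a)) {a..b}"
  by (rule fundamental_theorem_of_calculus[OF assms(1)])
     (auto simp: has_real_derivative_iff_has_vector_derivative[symmetric] intro!: has_field_derivative_at_within assms(2))

lemma FF_0: assumes "z < 1" "z \<noteq> 0" shows "FF z 0 = - ln (1 - z) / z"
proof -
  have d: "((\<lambda>s. (-1/z) * ln (dd z s)) has_real_derivative ff z 0 s) (at s)" if "s \<in> {-1..1}" for s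
  proof -
    have p: "dd z s > 0" by (rule dd_pos[OF assms(1) that])
    have d1: "((\<lambda>s. dd z s) has_real_derivative -z) (at s)" unfolding dd_def
      by (auto intro!: derivative_eq_intros)
    have "((\<lambda>s. ln (dd z s)) has_real_derivative (1 / dd z s * -z)) (at s)"
      by (rule DERIV_chain2[OF DERIV_ln_divide[OF p] d1])
    then have "((\<lambda>s. (-1/z) * ln (dd z s)) has_real_derivative (-1/z) * (1 / dd z s * -z)) (at s)"
      by (rule DERIV_cmult)
    then show ?thesis by (rule DERIV_cong) (use p assms(2) in \<open>simp add: ff_def\<close>)
  qed
  have "(ff z 0 has_integral ((-1/z) * ln (dd z 1) - (-1/z) * ln (dd z (-1)))) {-1..1}"
    by (rule ftc_real) (use d in auto)
  moreover have "(-1/z) * ln (dd z 1) - (-1/z) * ln (dd z (-1)) = - ln (1 - z) / z"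
  proof -
    have e1: "dd z 1 = 2 * (1 - z)" "dd z (-1) = 2" by (simp_all add: dd_def)
    have e2: "ln (2 * (1 - z)) = ln 2 + ln (1 - z)" using assms by (subst ln_mult) auto
    show ?thesis unfolding e1 e2 by (simp add: field_simps) (simp add: add_divide_distrib)
  qed
  ultimately show ?thesis using ff_int[OF assms(1), of 0] has_integral_unique by metis
qed



lemma K0_deriv:
  assumes "z < 1" "s \<in> {-1..1}"
  shows "((\<lambda>s. (z + z * s^2 - 2 * (2 - z) * s) / dd z s) has_real_derivative
          (z^2 * ff z 1 s - 2 * (2 - z) * ff z 0 s)) (at s)"
proof -
  have p: "dd z s > 0" by (rule dd_pos[OF assms])
  have "((\<lambda>s. (z + z * s^2 - 2 * (2 - z) * s) / (2 - z - z * s)) has_real_derivative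
      ((2 * z * s - 2 * (2 - z)) * (2 - z - z * s) + z * (z + z * s^2 - 2 * (2 - z) * s)) / (2 - z - z * s)^2) (at s)"
    using p unfolding dd_def
    by (auto intro!: derivative_eq_intros simp: power2_eq_square field_simps)
  moreover have "((2 * z * s - 2 * (2 - z)) * (2 - z - z * s) + z * (z + z * s^2 - 2 * (2 - z) * s)) / (2 - z - z * s)^2
     = z^2 * ff z 1 s - 2 * (2 - z) * ff z 0 s"
  proof -
    define D where "D = 2 - z - z * s"
    have D0: "D \<noteq> 0" using p by (simp add: D_def dd_def)
    have num: "(2 * z * s - 2 * (2 - z)) * D + z * (z + z * s^2 - 2 * (2 - z) * s) = z^2 * (1 - s^2) - 2 * (2 - z) * D"
      by (simp add: D_def algebra_simps power2_eq_square)
    have "z^2 * ff z 1 s - 2 * (2 - z) * ff z 0 s = z^2 * (1 - s^2) / D^2 - 2 * (2 - z) / D"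
      by (simp add: ff_def dd_def D_def power2_eq_square)
    also have "\<dots> = (z^2 * (1 - s^2) - 2 * (2 - z) * D) / D^2"
      using D0 by (simp add: field_simps power2_eq_square)
    finally show ?thesis unfolding D_def[symmetric] num by simp
  qed
  ultimately show ?thesis unfolding dd_def by simp
qed

lemma alg_poly:
  fixes a D P s z k :: real
  assumes "a = 1 - s^2" "D = 2 - z - z * s" "P = z + z * s^2 - 2 * (2 - z) * s"
  shows "(k+1) * (-2 * s) * P * D + a * (2 * z * s - 2 * (2 - z)) * D + (k+2) * z * a * P
       = (k+2) * z^2 * a^2 - 2 * (2 * k + 3) * (2 - z) * a * D + 4 * (k + 1) * D^2"
  unfolding assms by (simp add: algebra_simps power2_eq_square)

lemma alg_k:
  fixes a D P s z k X Y :: real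
  assumes "Y \<noteq> 0" "D \<noteq> 0" "a = 1 - s^2" "D = 2 - z - z * s" "P = z + z * s^2 - 2 * (2 - z) * s"
  shows "(((k+1) * X * (-2 * s) * P + X * a * (2 * z * s - 2 * (2 - z))) * (Y * D) - X * a * P * ((k+2) * Y * (-z))) / ((Y * D) * (Y * D))
   = (k+2) * z^2 * (X * a^2 / (Y * D * D)) - 2 * (2 * k + 3) * (2 - z) * (X * a / (Y * D)) + 4 * (k + 1) * (X / Y)"
proof -
  have l: "(((k+1) * X * (-2 * s) * P + X * a * (2 * z * s - 2 * (2 - z))) * (Y * D) - X * a * P * ((k+2) * Y * (-z))) / ((Y * D) * (Y * D))
     = X * ((k+1) * (-2 * s) * P * D + a * (2 * z * s - 2 * (2 - z)) * D + (k+2) * z * a * P) / (Y * D * D)"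
    using assms(1,2) by (simp add: field_simps)
  have r: "(k+2) * z^2 * (X * a^2 / (Y * D * D)) - 2 * (2 * k + 3) * (2 - z) * (X * a / (Y * D)) + 4 * (k + 1) * (X / Y)
     = X * ((k+2) * z^2 * a^2 - 2 * (2 * k + 3) * (2 - z) * a * D + 4 * (k + 1) * D^2) / (Y * D * D)"
    using assms(1,2) by (simp add: field_simps power2_eq_square)
  show ?thesis unfolding l r alg_poly[OF assms(3-5)] using assms(2) by simp
qed

lemma Kk_deriv:
  assumes "z < 1" "s \<in> {-1..1}"
  shows "((\<lambda>s. (1 - s^2)^(k+1) * (z + z * s^2 - 2 * (2 - z) * s) / dd z s ^ (k+2)) has_real_derivative
          ((real k + 2) * z^2 * ff z (k+2) s - 2 * (2 * real k + 3) * (2 - z) * ff z (k+1) s + 4 * (real k + 1) * ff z k s)) (at s)"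
proof -
  have p: "dd z s > 0" by (rule dd_pos[OF assms])
  define D where "D = 2 - z - z * s"
  define a where "a = 1 - s^2"
  define P where "P = z + z * s^2 - 2 * (2 - z) * s"
  have Dp: "D > 0" using p by (simp add: D_def dd_def)
  have d1: "((\<lambda>s. 1 - s^2) has_real_derivative (-2 * s)) (at s)"
    by (auto intro!: derivative_eq_intros)
  have da: "((\<lambda>s. (1 - s^2)^(k+1)) has_real_derivative ((real k + 1) * (1 - s^2)^k * (-2 * s))) (at s)"
    using DERIV_power[OF d1, of "k+1"] by (simp add: algebra_simps)
  have dP: "((\<lambda>s. z + z * s^2 - 2 * (2 - z) * s) has_real_derivative (2 * z * s - 2 * (2 - z))) (at s)"
    by (auto intro!: derivative_eq_intros simp: algebra_simps)
  have dD: "((\<lambda>s. 2 - z - z * s) has_real_derivative (-z)) (at s)"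
    by (auto intro!: derivative_eq_intros)
  have dDp: "((\<lambda>s. (2 - z - z * s)^(k+2)) has_real_derivative ((real k + 2) * (2 - z - z * s)^(k+1) * (-z))) (at s)"
    using DERIV_power[OF dD, of "k+2"] by (simp add: algebra_simps)
  have dN: "((\<lambda>s. (1 - s^2)^(k+1) * (z + z * s^2 - 2 * (2 - z) * s)) has_real_derivative
     ((real k + 1) * (1 - s^2)^k * (-2 * s)) * P + (2 * z * s - 2 * (2 - z)) * ((1 - s^2)^(k+1))) (at s)"
    using DERIV_mult[OF da dP] unfolding P_def .
  have dK: "((\<lambda>s. (1 - s^2)^(k+1) * (z + z * s^2 - 2 * (2 - z) * s) / (2 - z - z * s)^(k+2)) has_real_derivative
     ((((real k + 1) * (1 - s^2)^k * (-2 * s)) * P + (2 * z * s - 2 * (2 - z)) * ((1 - s^2)^(k+1))) * (2 - z - z * s)^(k+2)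
      - ((1 - s^2)^(k+1) * P) * ((real k + 2) * (2 - z - z * s)^(k+1) * (-z))) / ((2 - z - z * s)^(k+2) * (2 - z - z * s)^(k+2))) (at s)"
    using DERIV_divide[OF dN dDp] Dp unfolding P_def D_def by simp
  have Y: "D ^ (k+1) \<noteq> 0" using Dp by simp
  have e1: "(1 - s^2)^(k+1) = (1 - s^2)^k * a" "(1 - s^2)^(k+2) = (1 - s^2)^k * a^2"
    by (simp_all only: a_def power_add power_one_right)
  have e2: "(2 - z - z * s)^(k+2) = D^(k+1) * D" "(2 - z - z * s)^(k+1) = D^(k+1)"
    by (simp_all add: D_def)
  have p1: "D^(k+2+1) = D^(k+1) * D * D" by (simp add: power_add power3_eq_cube power2_eq_square mult.assoc)
  have p2: "D^(k+1+1) = D^(k+1) * D" by (simp add: power_add power2_eq_square mult.assoc)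
  have ffs: "ff z (k+2) s = (1 - s^2)^k * a^2 / (D^(k+1) * D * D)"
    "ff z (k+1) s = (1 - s^2)^k * a / (D^(k+1) * D)"
    "ff z k s = (1 - s^2)^k / D^(k+1)"
    unfolding ff_def dd_def D_def[symmetric] p1 p2 e1 by simp_all
  have eq: "((((real k + 1) * (1 - s^2)^k * (-2 * s)) * P + (2 * z * s - 2 * (2 - z)) * ((1 - s^2)^(k+1))) * (2 - z - z * s)^(k+2)
      - ((1 - s^2)^(k+1) * P) * ((real k + 2) * (2 - z - z * s)^(k+1) * (-z))) / ((2 - z - z * s)^(k+2) * (2 - z - z * s)^(k+2))
     = ((real k + 2) * z^2 * ff z (k+2) s - 2 * (2 * real k + 3) * (2 - z) * ff z (k+1) s + 4 * (real k + 1) * ff z k s)"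
    unfolding ffs e1 e2
    using alg_k[OF Y _ a_def D_def P_def, of "real k" "(1 - s^2)^k"] Dp
    by (simp add: algebra_simps)
  show ?thesis unfolding dd_def using dK unfolding eq .
qed



lemma FF_rec0:
  assumes "z < 1" "z \<noteq> 0"
  shows "z^2 * FF z 1 - 2 * (2 - z) * FF z 0 = -4"
proof -
  let ?K = "\<lambda>s. (z + z * s^2 - 2 * (2 - z) * s) / dd z s"
  have i1: "((\<lambda>s. z^2 * ff z 1 s - 2 * (2 - z) * ff z 0 s) has_integral (?K 1 - ?K (-1))) {-1..1}"
    by (rule ftc_real[OF _ K0_deriv[OF assms(1)]]) simp_all
  have i2: "((\<lambda>s. z^2 * ff z 1 s - 2 * (2 - z) * ff z 0 s) has_integral (z^2 * FF z 1 - 2 * (2 - z) * FF z 0)) {-1..1}"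
    by (intro has_integral_diff has_integral_mult_right ff_int assms(1))
  have "?K 1 - ?K (-1) = -4"
  proof -
    have "1 - z \<noteq> 0" using assms by simp
    then have a: "?K 1 = -2" by (simp add: dd_def field_simps)
    have b: "?K (-1) = 2" by (simp add: dd_def field_simps)
    show ?thesis using a b by simp
  qed
  then show ?thesis using has_integral_unique[OF i1 i2] by simp
qed

lemma FF_rec:
  assumes "z < 1"
  shows "(real k + 2) * z^2 * FF z (k+2) - 2 * (2 * real k + 3) * (2 - z) * FF z (k+1) + 4 * (real k + 1) * FF z k = 0"
proof -
  let ?K = "\<lambda>s. (1 - s^2)^(k+1) * (z + z * s^2 - 2 * (2 - z) * s) / dd z s ^ (k+2)"
  have i1: "((\<lambda>s. (real k + 2) * z^2 * ff z (k+2) s - 2 * (2 * real k + 3) * (2 - z) * ff z (k+1) s + 4 * (real k + 1) * ff z k s)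
     has_integral (?K 1 - ?K (-1))) {-1..1}"
    by (rule ftc_real[OF _ Kk_deriv[OF assms(1)]]) simp_all
  have i2: "((\<lambda>s. (real k + 2) * z^2 * ff z (k+2) s - 2 * (2 * real k + 3) * (2 - z) * ff z (k+1) s + 4 * (real k + 1) * ff z k s)
     has_integral ((real k + 2) * z^2 * FF z (k+2) - 2 * (2 * real k + 3) * (2 - z) * FF z (k+1) + 4 * (real k + 1) * FF z k)) {-1..1}"
    by (intro has_integral_diff has_integral_add has_integral_mult_right ff_int assms(1))
  have "?K 1 - ?K (-1) = 0" by simp
  then show ?thesis using has_integral_unique[OF i1 i2] by simp
qed

definition ee :: "real \<Rightarrow> nat \<Rightarrow> real" where
  "ee z n = fact n * z^(2*n+1) / 2^n * FF z n"

lemma ee_eq: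
  assumes "z < 1" "z \<noteq> 0"
  shows "- ln (1 - z) * qq z n - pp z n = ee z n"
proof -
  let ?l = "- ln (1 - z)"
  have e0: "ee z 0 = ?l" using FF_0[OF assms] assms(2) by (simp add: ee_def)
  have e1: "ee z 1 = (2 - z) * ?l - 2 * z"
  proof -
    have "FF z 1 = (2 * (2 - z) * FF z 0 - 4) / z^2" using FF_rec0[OF assms] assms(2)
      by (simp add: field_simps)
    then show ?thesis using FF_0[OF assms] assms(2) by (simp add: ee_def field_simps power2_eq_square)
  qed
  have step: "ee z (n + 2) = (2 * real n + 3) * (2 - z) * ee z (n + 1) - (real n + 1)^2 * z^2 * ee z n" for n
  proof -
    have h: "(real n + 2) * z^2 * FF z (n+2) = 2 * (2 * real n + 3) * (2 - z) * FF z (n+1) - 4 * (real n + 1) * FF z n"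
      using FF_rec[OF assms(1), of n] by linarith
    have nz: "(real n + 2) * z^2 \<noteq> 0" using assms(2) by (simp add: add_nonneg_pos)
    have r: "FF z (n+2) = (2 * (2 * real n + 3) * (2 - z) * FF z (n+1) - 4 * (real n + 1) * FF z n) / ((real n + 2) * z^2)"
      unfolding h[symmetric] using nz by simp
    have f: "fact (n + 2) = (real n + 2) * (real n + 1) * (fact n :: real)" "fact (n + 1) = (real n + 1) * (fact n :: real)"
      by (simp_all add: algebra_simps)
    have x1: "2*(n+2)+1 = (2*n+1)+2+2" "2*(n+1)+1 = (2*n+1)+2" by simp_all
    have zp: "z^(2*(n+2)+1) = z^(2*n+1) * z^2 * z^2" "z^(2*(n+1)+1) = z^(2*n+1) * z^2"
      by (simp_all only: x1 power_add)
    have tp: "(2::real)^(n+2) = 2^n * 4" "(2::real)^(n+1) = 2^n * 2" by (simp_all add: power_add)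
    define c where "c = fact n * z^(2*n+1) / 2^n"
    have E2: "ee z (n+2) = c * (real n + 1) * z^2 / 4 * ((real n + 2) * z^2 * FF z (n+2))"
      unfolding ee_def c_def f zp tp by (simp add: field_simps)
    have E1: "ee z (n+1) = c * (real n + 1) * z^2 / 2 * FF z (n+1)"
      unfolding ee_def c_def f zp tp by (simp add: field_simps)
    have E0: "ee z n = c * FF z n" unfolding ee_def c_def by simp
    show ?thesis unfolding E2 E1 E0 h by (simp add: field_simps power2_eq_square)
  qed
  have "?l * qq z n - pp z n = ee z n \<and> ?l * qq z (Suc n) - pp z (Suc n) = ee z (Suc n)"
  proof (induction n)
    case 0 then show ?case using e0 e1 by (simp add: log_cf_a_def log_cf_b_def)
  next
    case (Suc n)
    have "?l * qq z (Suc (Suc n)) - pp z (Suc (Suc n)) =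
       (2 * real n + 3) * (2 - z) * (?l * qq z (Suc n) - pp z (Suc n)) - (real n + 1)^2 * z^2 * (?l * qq z n - pp z n)"
      unfolding qq_rec pp_rec by (simp add: algebra_simps)
    also have "\<dots> = ee z (Suc (Suc n))" using Suc.IH step[of n] by simp
    finally show ?case using Suc.IH by simp
  qed
  then show ?thesis by simp
qed



lemma cc_nonneg: "0 \<le> cc n" using cc_pos[of n] by simp

lemma conv_1w: "conv 1 w n = (\<Sum>k=0..n. cc k * w^k * cc (n - k))"
  by (simp add: conv_def)

lemma conv_nonneg: assumes "w \<ge> 0" shows "conv 1 w n \<ge> 0"
  unfolding conv_1w by (intro sum_nonneg mult_nonneg_nonneg cc_nonneg zero_le_power assms)

lemma conv_ge_cc: assumes "w \<ge> 0" shows "conv 1 w n \<ge> cc n"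
proof -
  have "conv 1 w n = cc 0 * w^0 * cc (n - 0) + (\<Sum>k=Suc 0..n. cc k * w^k * cc (n - k))"
    unfolding conv_1w by (simp add: sum.atLeast_Suc_atMost)
  moreover have "(\<Sum>k=Suc 0..n. cc k * w^k * cc (n - k)) \<ge> 0"
    by (intro sum_nonneg mult_nonneg_nonneg cc_nonneg zero_le_power assms)
  ultimately show ?thesis by simp
qed

lemma conv_pos: assumes "w \<ge> 0" shows "conv 1 w n > 0"
  using conv_ge_cc[OF assms, of n] cc_pos[of n] by linarith

lemma conv_scale:
  assumes "u \<noteq> 0"
  shows "conv u v n = u^n * conv 1 (v / u) n"
proof -
  have "conv u v n = (\<Sum>k=0..n. u^n * (cc k * (v/u)^k * cc (n - k)))"
    unfolding conv_def
  proof (intro sum.cong refl)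
    fix k assume "k \<in> {0..n}"
    then have "u^n = u^k * u^(n-k)" by (simp add: power_add[symmetric])
    then show "cc k * v ^ k * (cc (n - k) * u ^ (n - k)) = u^n * (cc k * (v/u)^k * cc (n - k))"
      using assms by (simp add: power_divide field_simps)
  qed
  also have "\<dots> = u^n * conv 1 (v / u) n" unfolding conv_1w by (simp add: sum_distrib_left)
  finally show ?thesis .
qed

lemma summable_n_geom: assumes "0 \<le> w" "w < 1" shows "summable (\<lambda>k. (real k + 1) * w^k)"
proof -
  have "summable (\<lambda>n. diffs (\<lambda>_. 1::real) n * w ^ n)"
    by (rule termdiff_converges[of w 1]) (use assms in \<open>auto intro: summable_geometric\<close>)
  then show ?thesis by (simp add: diffs_def add.commute)
qed

lemma summable_ccw: assumes "0 \<le> w" "w < 1" shows "summable (\<lambda>k. cc k * w^k)"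
proof (rule summable_comparison_test[OF _ summable_geometric[of w]])
  show "\<exists>N. \<forall>n\<ge>N. norm (cc n * w ^ n) \<le> w ^ n"
    using cc_pos cc_le1 assms by (auto intro!: exI[of _ 0] mult_left_le_one_le simp: abs_mult less_imp_le)
qed (use assms in simp)

lemma cc_sq_sum:
  assumes "0 \<le> w" "w < 1"
  shows "(\<Sum>k. cc k * w^k)^2 = 1 / (1 - w)"
proof -
  have s: "summable (\<lambda>k. norm (cc k * w^k))"
    using summable_ccw[OF assms] cc_pos assms by (simp add: abs_mult less_imp_le)
  have "(\<lambda>k. \<Sum>i\<le>k. (cc i * w^i) * (cc (k - i) * w^(k - i))) sums ((\<Sum>k. cc k * w^k) * (\<Sum>k. cc k * w^k))"
    by (rule Cauchy_product_sums[OF s s])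
  moreover have "(\<Sum>i\<le>k. (cc i * w^i) * (cc (k - i) * w^(k - i))) = w^k" for k
  proof -
    have "(\<Sum>i\<le>k. (cc i * w^i) * (cc (k - i) * w^(k - i))) = (\<Sum>i=0..k. w^k * (cc i * 1^i * (cc (k - i) * 1^(k - i))))"
      unfolding atMost_atLeast0
    proof (intro sum.cong refl)
      fix i assume "i \<in> {0..k}"
      then have "w^k = w^i * w^(k-i)" by (simp add: power_add[symmetric])
      then show "cc i * w ^ i * (cc (k - i) * w ^ (k - i)) = w ^ k * (cc i * 1 ^ i * (cc (k - i) * 1 ^ (k - i)))"
        by simp
    qed
    also have "\<dots> = w^k * conv 1 1 k" unfolding conv_def by (simp add: sum_distrib_left)
    finally show ?thesis by (simp add: conv_11)
  qed
  ultimately have "(\<lambda>k. w^k) sums ((\<Sum>k. cc k * w^k) * (\<Sum>k. cc k * w^k))" by simp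
  moreover have "(\<lambda>k. w^k) sums (1 / (1 - w))" using geometric_sums[of w] assms by simp
  ultimately show ?thesis using sums_unique2 by (metis power2_eq_square)
qed



lemma sqrt_ratio_lim: "(\<lambda>n. sqrt (real n + 1) / sqrt (real n - real k + 1)) \<longlonglongrightarrow> 1"
  by real_asymp

lemma sqrt_ratio_lim2: "(\<lambda>n. sqrt (real n + 1) / sqrt (real n + 2)) \<longlonglongrightarrow> 1"
  by real_asymp

lemma sqrt_cc_bound:
  assumes "k \<le> n"
  shows "sqrt (real n + 1) * cc (n - k) \<le> sqrt (real k + 1)"
proof (rule real_le_rsqrt)
  define m where "m = n - k"
  have nm: "real n + 1 \<le> (real k + 1) * (real m + 1)"
  proof -
    have "real n = real k + real m" using assms by (simp add: m_def)
    then show ?thesis by (simp add: algebra_simps)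
  qed
  have "(sqrt (real n + 1) * cc m)^2 = (real n + 1) * cc m ^ 2" by (simp add: power_mult_distrib)
  also have "\<dots> \<le> ((real k + 1) * (real m + 1)) * cc m ^ 2"
    by (rule mult_right_mono[OF nm]) simp
  also have "\<dots> = (real k + 1) * (cc m ^ 2 * (real m + 1))" by (simp add: algebra_simps)
  also have "\<dots> \<le> (real k + 1) * 1" by (rule mult_left_mono[OF cc_upper]) simp
  finally show "(sqrt (real n + 1) * cc (n - k))^2 \<le> real k + 1" by (simp add: m_def)
qed

lemma RR_lim:
  assumes "0 \<le> w" "w < 1"
  shows "(\<lambda>n. sqrt (real n + 1) * conv 1 w n) \<longlonglongrightarrow> (\<Sum>k. cc k * w^k) / sqrt pi"
proof -
  define a where "a k n = (if k \<le> n then sqrt (real n + 1) * cc (n - k) * (cc k * w^k) else 0)" for k n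
  have lim: "(\<lambda>n. a k n) \<longlonglongrightarrow> (1 / sqrt pi) * (cc k * w^k)" for k
  proof -
    have h1: "(\<lambda>n. sqrt (real (n - k) + 1) * cc (n - k)) \<longlonglongrightarrow> 1 / sqrt pi"
      using filterlim_compose[OF cc_lim filterlim_minus_const_nat_at_top[of k]] by simp
    have h2: "(\<lambda>n. sqrt (real n + 1) / sqrt (real (n - k) + 1)) \<longlonglongrightarrow> 1"
    proof (rule Lim_transform_eventually[OF sqrt_ratio_lim[of k]])
      show "\<forall>\<^sub>F n in sequentially. sqrt (real n + 1) / sqrt (real n - real k + 1) = sqrt (real n + 1) / sqrt (real (n - k) + 1)"
        using eventually_ge_at_top[of k] by eventually_elim (simp add: of_nat_diff)
    qed
    have h3: "(\<lambda>n. (sqrt (real n + 1) / sqrt (real (n - k) + 1)) * (sqrt (real (n - k) + 1) * cc (n - k)) * (cc k * w^k))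
        \<longlonglongrightarrow> (1 / sqrt pi) * (cc k * w^k)"
      using tendsto_mult[OF tendsto_mult[OF h2 h1] tendsto_const[of "cc k * w^k"]] by simp
    show ?thesis
    proof (rule Lim_transform_eventually[OF h3])
      show "\<forall>\<^sub>F n in sequentially. (sqrt (real n + 1) / sqrt (real (n - k) + 1)) * (sqrt (real (n - k) + 1) * cc (n - k)) * (cc k * w^k) = a k n"
        using eventually_ge_at_top[of k]
      proof eventually_elim
        case (elim n)
        have "sqrt (real (n - k) + 1) > 0" by simp
        then show ?case using elim by (simp add: a_def field_simps)
      qed
    qed
  qed
  have bound: "norm (a k n) \<le> sqrt (real k + 1) * w^k" for k n
  proof (cases "k \<le> n")
    case True
    have "norm (a k n) = sqrt (real n + 1) * cc (n - k) * (cc k * w^k)"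
      using True assms by (simp add: a_def abs_mult abs_of_nonneg[OF cc_nonneg])
    also have "\<dots> \<le> sqrt (real k + 1) * (1 * w^k)"
      by (intro mult_mono sqrt_cc_bound True mult_right_mono cc_le1) (use assms cc_nonneg in auto)
    finally show ?thesis by simp
  next
    case False then show ?thesis using assms by (simp add: a_def)
  qed
  have summ: "summable (\<lambda>k. sqrt (real k + 1) * w^k)"
  proof (rule summable_comparison_test[OF _ summable_n_geom[OF assms]])
    have "sqrt (real k + 1) \<le> real k + 1" for k
    proof -
      have "sqrt (real k + 1) \<le> sqrt ((real k + 1)^2)"
        by (rule real_sqrt_le_mono) (simp add: power2_eq_square)
      then show ?thesis by simp
    qed
    then show "\<exists>N. \<forall>n\<ge>N. norm (sqrt (real n + 1) * w ^ n) \<le> (real n + 1) * w ^ n"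
      using assms by (auto intro!: exI[of _ 0] mult_right_mono)
  qed
  have T: "((\<lambda>n. \<Sum>k. a k n) \<longlonglongrightarrow> (\<Sum>k. (1 / sqrt pi) * (cc k * w^k)))"
  proof -
    have bnd: "eventually (\<lambda>(k,n). norm (a k n) \<le> sqrt (real k + 1) * w^k) (at_top \<times>\<^sub>F sequentially)"
      by (rule always_eventually) (use bound in auto)
    show ?thesis using tannerys_theorem[OF lim bnd summ trivial_limit_sequentially] by blast
  qed
  have e1: "(\<Sum>k. a k n) = sqrt (real n + 1) * conv 1 w n" for n
  proof -
    have "(\<Sum>k. a k n) = (\<Sum>k\<in>{0..n}. a k n)" by (rule suminf_finite) (auto simp: a_def)
    also have "\<dots> = sqrt (real n + 1) * conv 1 w n"
      unfolding conv_1w a_def by (simp add: sum_distrib_left mult_ac)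
    finally show ?thesis .
  qed
  have e2: "(\<Sum>k. (1 / sqrt pi) * (cc k * w^k)) = (\<Sum>k. cc k * w^k) / sqrt pi"
    using suminf_mult[OF summable_ccw[OF assms], of "1 / sqrt pi"] by simp
  show ?thesis using T unfolding e1 e2 .
qed

lemma theta_lim:
  assumes "0 \<le> w" "w < 1"
  shows "(\<lambda>k. (real k + 1) * conv 1 w k * conv 1 w (Suc k)) \<longlonglongrightarrow> 1 / (pi * (1 - w))"
proof -
  define L where "L = (\<Sum>k. cc k * w^k) / sqrt pi"
  have g: "(\<lambda>n. sqrt (real n + 1) * conv 1 w n) \<longlonglongrightarrow> L" unfolding L_def by (rule RR_lim[OF assms])
  have gs: "(\<lambda>n. sqrt (real (Suc n) + 1) * conv 1 w (Suc n)) \<longlonglongrightarrow> L" using LIMSEQ_Suc[OF g] by simp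
  have "(\<lambda>k. (sqrt (real k + 1) * conv 1 w k) * (sqrt (real (Suc k) + 1) * conv 1 w (Suc k)) * (sqrt (real k + 1) / sqrt (real k + 2)))
     \<longlonglongrightarrow> L * L * 1"
    by (intro tendsto_mult g gs sqrt_ratio_lim2)
  moreover have "(sqrt (real k + 1) * conv 1 w k) * (sqrt (real (Suc k) + 1) * conv 1 w (Suc k)) * (sqrt (real k + 1) / sqrt (real k + 2))
     = (real k + 1) * conv 1 w k * conv 1 w (Suc k)" for k
  proof -
    have a: "sqrt (real k + 1) * sqrt (real k + 1) = real k + 1"
      using real_sqrt_pow2[of "real k + 1"] by (simp add: power2_eq_square)
    have b: "sqrt (real k + 2) > 0" by simp
    have c: "real (Suc k) + 1 = real k + 2" by simp
    have gen: "\<And>A x y::real. (A * x) * (sqrt (real k + 2) * y) * (A / sqrt (real k + 2)) = (A * A) * x * y"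
      using b by (simp add: field_simps)
    show ?thesis unfolding c gen a by (rule refl)
  qed
  moreover have "L * L * 1 = 1 / (pi * (1 - w))"
  proof -
    have "L * L = (\<Sum>k. cc k * w^k)^2 / pi" unfolding L_def by (simp add: power2_eq_square)
    then show ?thesis using cc_sq_sum[OF assms] by simp
  qed
  ultimately show ?thesis by simp
qed



lemma sq_le1: assumes "s \<in> {-1..1::real}" shows "0 \<le> 1 - s^2"
proof -
  have "\<bar>s\<bar> \<le> 1" using assms by auto
  then have "s^2 \<le> 1" by (simp add: abs_square_le_1)
  then show ?thesis by simp
qed

lemma FF_nonneg: assumes "z < 1" shows "FF z n \<ge> 0"
proof -
  have "0 \<le> integral {-1..1} (ff z n)"
  proof (rule integral_nonneg)
    show "ff z n integrable_on {-1..1}" using ff_int[OF assms] by blast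
    fix s :: real assume s: "s \<in> {-1..1}"
    have "0 \<le> 1 - s^2" by (rule sq_le1[OF s])
    then show "0 \<le> ff z n s" unfolding ff_def using dd_pos[OF assms s] by simp
  qed
  then show ?thesis by (simp add: FF_def)
qed

lemma FF_upper:
  assumes "z < 1" and S: "S \<ge> 0" "S^2 = 1 - z"
  shows "FF z n \<le> 2 * ((2 / (1 + S)^2)^n * (1 / (2 - z - \<bar>z\<bar>)))"
proof -
  define u where "u = (1 + S)^2"
  define dm where "dm = 2 - z - \<bar>z\<bar>"
  have u: "u > 0" using S by (simp add: u_def)
  have dm: "dm > 0" using assms(1) by (simp add: dm_def)
  have pt: "ff z n s \<le> (2 / u)^n * (1 / dm)" if s: "s \<in> {-1..1}" for s
  proof -
    have dpos: "dd z s > 0" by (rule dd_pos[OF assms(1) s])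
    have dge: "dd z s \<ge> dm" unfolding dm_def by (rule dd_lower[OF assms(1) s])
    have a0: "0 \<le> 1 - s^2" by (rule sq_le1[OF s])
    have zS: "z = 1 - S^2" using S by simp
    have key: "2 * dd z s - u * (1 - s^2) = ((1 + S) * s - (1 - S))^2"
      unfolding dd_def u_def zS by (simp add: algebra_simps power2_eq_square)
    have k2: "u * (1 - s^2) \<le> 2 * dd z s" using key by (smt (verit) zero_le_power2)
    have X: "(1 - s^2) / dd z s \<le> 2 / u" using k2 dpos u by (simp add: field_simps)
    have X0: "0 \<le> (1 - s^2) / dd z s" using a0 dpos by simp
    have "ff z n s = ((1 - s^2) / dd z s)^n * (1 / dd z s)"
      by (simp add: ff_def power_divide)
    also have "\<dots> \<le> (2 / u)^n * (1 / dm)"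
      by (intro mult_mono power_mono X X0) (use dpos dge dm u in \<open>auto simp: divide_simps\<close>)
    finally show ?thesis .
  qed
  have "FF z n \<le> 2 * ((2 / u)^n * (1 / dm))"
    using has_integral_le[OF ff_int[OF assms(1)] has_integral_const_real[of "(2 / u)^n * (1 / dm)" "-1" 1]] pt
    by simp
  then show ?thesis by (simp add: u_def dm_def)
qed



theorem theorem7p1:
  fixes z :: real
  assumes "z < 1" and "z \<noteq> 0"
  shows "((\<lambda>n. cf_p (log_cf_a z) (log_cf_b z) n / cf_q (log_cf_a z) (log_cf_b z) n)
           \<longlonglongrightarrow> - ln (1 - z) \<and>
         (\<lambda>n. - ln (1 - z) - cf_p (log_cf_a z) (log_cf_b z) n / cf_q (log_cf_a z) (log_cf_b z) n)
           \<sim>[at_top] (\<lambda>n. 2 * pi / (((1 + sqrt (1 - z))^2 / z) ^ (2 * n + 1))))"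
proof -
  define S where "S = sqrt (1 - z)"
  define u where "u = (1 + S)^2"
  define v where "v = (1 - S)^2"
  define w where "w = v / u"
  define l where "l = - ln (1 - z)"
  define R where "R n = conv 1 w n" for n
  have S0: "S > 0" using assms by (simp add: S_def)
  have S2: "S^2 = 1 - z" using assms by (simp add: S_def)
  have SS: "S * S = 1 - z" using S2 by (simp add: power2_eq_square)
  have S1: "S \<noteq> 1" using SS assms(2) by auto
  have u0: "u > 0" using S0 by (simp add: u_def)
  have v0: "v > 0" using S1 by (simp add: v_def)
  have uv1: "u + v = 2 * (2 - z)"
  proof -
    have "u + v = 2 + 2 * (S * S)" by (simp add: u_def v_def power2_eq_square algebra_simps)
    then show ?thesis using SS by simp
  qed
  have uv2: "u * v = z^2"
  proof -
    have "u * v = ((1 + S) * (1 - S))^2" by (simp add: u_def v_def power_mult_distrib)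
    also have "(1 + S) * (1 - S) = 1 - S * S" by (simp add: algebra_simps)
    finally show ?thesis using SS by simp
  qed
  have uv3: "u - v = 4 * S" by (simp add: u_def v_def power2_eq_square algebra_simps)
  have w0: "0 < w" using u0 v0 by (simp add: w_def)
  have w1: "w < 1" using u0 uv3 S0 by (simp add: w_def)
  have zu: "(z / u)^2 = w"
    using u0 uv2 by (simp add: w_def power_divide field_simps power2_eq_square)
  have qq_eq: "qq z n = fact n * (u^n * R n)" for n
    using qq_conv[OF uv1 uv2, of n] conv_scale[of u v n] u0 by (simp add: R_def w_def)
  have R0: "R n > 0" for n unfolding R_def by (rule conv_pos) (use w0 in simp)
  have qq0: "qq z n > 0" for n unfolding qq_eq using R0 u0 by simp

  define dm where "dm = 2 - z - \<bar>z\<bar>"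
  have dm0: "dm > 0" using assms(1) by (simp add: dm_def)
  define C where "C = 2 * \<bar>z\<bar> / dm"
  have bndA: "\<bar>ee z n / qq z n\<bar> \<le> C * ((real n + 1) * w^n)" for n
  proof -
    have FFu: "FF z n \<le> 2 * ((2 / u)^n * (1 / dm))"
      using FF_upper[OF assms(1) less_imp_le[OF S0] S2, of n] by (simp add: u_def dm_def)
    have FFn: "FF z n \<ge> 0" by (rule FF_nonneg[OF assms(1)])
    have e: "\<bar>ee z n / qq z n\<bar> = \<bar>z\<bar>^(2*n+1) * FF z n / (2^n * u^n * R n)"
      using R0[of n] u0 FFn by (simp add: ee_def qq_eq abs_mult power_abs field_simps)
    also have "\<dots> \<le> \<bar>z\<bar>^(2*n+1) * (2 * ((2 / u)^n * (1 / dm))) / (2^n * u^n * R n)"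
      by (intro divide_right_mono mult_left_mono FFu) (use R0[of n] u0 in auto)
    also have "\<dots> = C * w^n / R n"
    proof -
      have a0: "\<bar>z\<bar>^(2*n) = (z^2)^n" by (simp only: power_mult power2_abs)
      have a1: "\<bar>z\<bar>^(2*n+1) = \<bar>z\<bar> * (z^2)^n"
        by (simp only: power_add a0 power_one_right) (rule mult.commute)
      have a2: "(2 / u)^n = 2^n / u^n" by (simp add: power_divide)
      have a3: "w^n = (z^2)^n / (u^n * u^n)"
        unfolding zu[symmetric] by (simp add: power_divide power_mult_distrib power2_eq_square)
      show ?thesis unfolding a1 a2 a3 C_def using u0 dm0 R0[of n] by (simp add: field_simps)
    qed
    also have "\<dots> \<le> C * w^n * (real n + 1)"
    proof -
      have "cc n * (real n + 1) \<ge> 1" by (rule cc_lower)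
      moreover have "R n \<ge> cc n" unfolding R_def by (rule conv_ge_cc) (use w0 in simp)
      ultimately have "R n * (real n + 1) \<ge> 1" by (smt (verit) mult_right_mono of_nat_0_le_iff)
      then have "1 / R n \<le> real n + 1" using R0[of n] by (simp add: field_simps)
      moreover have "C * w^n \<ge> 0" using w0 dm0 by (simp add: C_def)
      ultimately show ?thesis
        by (metis (no_types, lifting) divide_inverse inverse_eq_divide mult_left_mono)
    qed
    finally show ?thesis by (simp add: algebra_simps)
  qed
  have limA: "(\<lambda>n. ee z n / qq z n) \<longlonglongrightarrow> 0"
  proof (rule Lim_null_comparison)
    show "\<forall>\<^sub>F n in sequentially. norm (ee z n / qq z n) \<le> C * ((real n + 1) * w^n)"
      using bndA by simp
    have A: "(\<lambda>n. of_nat n * w^n) \<longlonglongrightarrow> 0" by (rule powser_times_n_limit_0) (use w0 w1 in simp)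
    have B: "(\<lambda>n. w^n) \<longlonglongrightarrow> 0" by (rule LIMSEQ_power_zero) (use w0 w1 in simp)
    have "(\<lambda>n. C * (of_nat n * w^n + w^n)) \<longlonglongrightarrow> C * (0 + 0)"
      by (rule tendsto_mult[OF tendsto_const tendsto_add[OF A B]])
    then show "(\<lambda>n. C * ((real n + 1) * w^n)) \<longlonglongrightarrow> 0" by (simp add: algebra_simps)
  qed
  have pq_eq: "pp z n / qq z n = l - ee z n / qq z n" for n
    using ee_eq[OF assms, of n] qq0[of n] by (simp add: l_def field_simps)
  have conv1: "(\<lambda>n. pp z n / qq z n) \<longlonglongrightarrow> l"
    unfolding pq_eq using tendsto_diff[OF tendsto_const[of l] limA] by simp

  define \<theta> where "\<theta> k = 1 / (pi * (1 - w) * ((real k + 1) * R k * R (Suc k)))" for k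
  define K where "K n = 2 * pi * (1 - w) * (z / u)^(2*n+1)" for n
  have pw: "pi * (1 - w) \<noteq> 0" using w1 by simp
  have T: "pp z (Suc k) / qq z (Suc k) - pp z k / qq z k = K k * \<theta> k" for k
  proof -
    have "pp z (Suc k) / qq z (Suc k) - pp z k / qq z k
        = (pp z (Suc k) * qq z k - pp z k * qq z (Suc k)) / (qq z k * qq z (Suc k))"
      using qq0[of k] qq0[of "Suc k"] by (simp add: field_simps)
    also have "\<dots> = 2 * (fact k)^2 * z^(2*k+1) / (qq z k * qq z (Suc k))" by (simp only: pq_det)
    also have "\<dots> = 2 * (z / u)^(2*k+1) / ((real k + 1) * R k * R (Suc k))"
    proof -
      have f: "(fact (Suc k) :: real) = (real k + 1) * fact k" by simp
      have kk: "2*k+1 = k + Suc k" by simp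
      have p: "u^(2*k+1) = u^k * u^(Suc k)" by (simp only: kk power_add)
      have fk: "(fact k :: real) * fact k \<noteq> 0" by simp
      have s1: "qq z k * qq z (Suc k) = (fact k * fact k) * ((real k + 1) * (u^k * R k) * (u^(Suc k) * R (Suc k)))"
        unfolding qq_eq f by (simp add: algebra_simps)
      have s2: "2 * (fact k)^2 * z^(2*k+1) = (fact k * fact k) * (2 * z^(2*k+1))"
        by (simp add: power2_eq_square algebra_simps)
      have "2 * (fact k)^2 * z^(2*k+1) / (qq z k * qq z (Suc k))
          = (2 * z^(2*k+1)) / ((real k + 1) * (u^k * R k) * (u^(Suc k) * R (Suc k)))"
        unfolding s1 s2 by (rule mult_divide_mult_cancel_left[OF fk])
      also have "\<dots> = 2 * (z^(2*k+1) / (u^k * u^(Suc k))) / ((real k + 1) * R k * R (Suc k))"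
        using u0 R0[of k] R0[of "Suc k"] by (simp add: field_simps)
      also have "\<dots> = 2 * (z / u)^(2*k+1) / ((real k + 1) * R k * R (Suc k))"
        unfolding p[symmetric] power_divide ..
      finally show ?thesis .
    qed
    also have "\<dots> = K k * \<theta> k"
    proof -
      have D0: "(real k + 1) * R k * R (Suc k) \<noteq> 0" using R0[of k] R0[of "Suc k"] by simp
      have gen: "\<And>Y D. D \<noteq> 0 \<Longrightarrow> 2 * Y / D = (2 * pi * (1 - w) * Y) * (1 / (pi * (1 - w) * D))"
        using pw by (simp add: field_simps)
      show ?thesis unfolding K_def \<theta>_def by (rule gen[OF D0])
    qed
    finally show ?thesis .
  qed
  have \<theta>lim: "\<theta> \<longlonglongrightarrow> 1"
  proof -
    have X: "(\<lambda>k. (real k + 1) * R k * R (Suc k)) \<longlonglongrightarrow> 1 / (pi * (1 - w))"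
      unfolding R_def by (rule theta_lim) (use w0 w1 in simp_all)
    have "(\<lambda>k. 1 / (pi * (1 - w) * ((real k + 1) * R k * R (Suc k)))) \<longlonglongrightarrow> 1 / (pi * (1 - w) * (1 / (pi * (1 - w))))"
      by (intro tendsto_divide tendsto_mult tendsto_const X) (use pw in simp)
    then show ?thesis using pw unfolding \<theta>_def by simp
  qed
  have Kn0: "K n \<noteq> 0" for n using pw assms(2) u0 by (simp add: K_def)
  have sumsE: "(\<lambda>j. w^j * \<theta> (j + n)) sums ((l - pp z n / qq z n) / K n)" for n
  proof -
    have f: "(\<lambda>j. pp z (j + n) / qq z (j + n)) \<longlonglongrightarrow> l"
      by (rule LIMSEQ_ignore_initial_segment[OF conv1])
    have s1: "(\<lambda>j. pp z (Suc j + n) / qq z (Suc j + n) - pp z (j + n) / qq z (j + n)) sums (l - pp z (0 + n) / qq z (0 + n))"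
      using telescope_sums[OF f] by simp
    have eqT: "pp z (Suc j + n) / qq z (Suc j + n) - pp z (j + n) / qq z (j + n) = K n * (w^j * \<theta> (j + n))" for j
    proof -
      have "K (j + n) = K n * w^j"
      proof -
        have e0: "(z / u)^(2*(j+n)+1) = (z / u)^(2*n+1) * ((z / u)^2)^j"
          by (simp add: power_add[symmetric] power_mult[symmetric] algebra_simps)
        have e: "(z / u)^(2*(j+n)+1) = (z / u)^(2*n+1) * w^j" using e0 unfolding zu .
        show ?thesis unfolding K_def e by (simp add: mult_ac)
      qed
      then show ?thesis using T[of "j + n"] by simp
    qed
    have "(\<lambda>j. K n * (w^j * \<theta> (j + n))) sums (l - pp z n / qq z n)"
      using s1 unfolding eqT by simp
    then have "(\<lambda>j. (1 / K n) * (K n * (w^j * \<theta> (j + n)))) sums ((1 / K n) * (l - pp z n / qq z n))"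
      by (rule sums_mult)
    then show ?thesis using Kn0[of n] by simp
  qed
  have tann: "(\<lambda>n. \<Sum>j. w^j * \<theta> (j + n)) \<longlonglongrightarrow> 1 / (1 - w)"
  proof -
    obtain B where B: "B > 0" "\<And>k. norm (\<theta> k) \<le> B"
      using convergent_imp_Bseq[OF convergentI[OF \<theta>lim]] by (auto elim: BseqE)
    have lim: "(\<lambda>n. w^j * \<theta> (j + n)) \<longlonglongrightarrow> w^j * 1" for j
      using tendsto_mult[OF tendsto_const LIMSEQ_ignore_initial_segment[OF \<theta>lim, of j]]
      by (simp add: add.commute)
    have bnd: "eventually (\<lambda>(j,n). norm (w^j * \<theta> (j + n)) \<le> B * w^j) (at_top \<times>\<^sub>F sequentially)"
    proof (rule always_eventually, clarify)
      fix j n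
      have "norm (w^j * \<theta> (j + n)) = w^j * norm (\<theta> (j + n))" using w0 by (simp add: abs_mult)
      also have "\<dots> \<le> w^j * B" by (rule mult_left_mono[OF B(2)]) (use w0 in simp)
      finally show "norm (w^j * \<theta> (j + n)) \<le> B * w^j" by (simp add: mult.commute)
    qed
    have summ: "summable (\<lambda>j. B * w^j)" by (intro summable_mult summable_geometric) (use w0 w1 in simp)
    have "(\<lambda>n. \<Sum>j. w^j * \<theta> (j + n)) \<longlonglongrightarrow> (\<Sum>j. w^j * 1)"
      using tannerys_theorem[OF lim bnd summ trivial_limit_sequentially] by blast
    moreover have "(\<Sum>j. w^j * 1) = 1 / (1 - w)" using suminf_geometric[of w] w0 w1 by simp
    ultimately show ?thesis by simp
  qed
  have ratio: "(\<lambda>n. (l - pp z n / qq z n) / K n) \<longlonglongrightarrow> 1 / (1 - w)"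
    using tann sums_unique[OF sumsE] by simp
  have rho: "2 * pi / (((1 + sqrt (1 - z))^2 / z) ^ (2 * n + 1)) = K n / (1 - w)" for n
    using w1 assms(2) u0 unfolding K_def u_def[symmetric] S_def[symmetric]
    by (simp add: power_divide field_simps)
  have final: "(\<lambda>n. (l - pp z n / qq z n) / (2 * pi / (((1 + sqrt (1 - z))^2 / z) ^ (2 * n + 1)))) \<longlonglongrightarrow> 1"
  proof -
    have "(\<lambda>n. (1 - w) * ((l - pp z n / qq z n) / K n)) \<longlonglongrightarrow> (1 - w) * (1 / (1 - w))"
      by (intro tendsto_mult tendsto_const ratio)
    moreover have "(1 - w) * ((l - pp z n / qq z n) / K n) = (l - pp z n / qq z n) / (2 * pi / (((1 + sqrt (1 - z))^2 / z) ^ (2 * n + 1)))" for n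
      unfolding rho using w1 Kn0[of n] by (simp add: field_simps)
    ultimately show ?thesis using w1 by simp
  qed
  show ?thesis
  proof
    show "(\<lambda>n. pp z n / qq z n) \<longlonglongrightarrow> - ln (1 - z)" using conv1 by (simp add: l_def)
    show "(\<lambda>n. - ln (1 - z) - pp z n / qq z n) \<sim>[at_top] (\<lambda>n. 2 * pi / (((1 + sqrt (1 - z))^2 / z) ^ (2 * n + 1)))"
      by (rule asymp_equivI') (use final in \<open>simp add: l_def\<close>)
  qed
qed


end
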